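(* Let $\lambda$ be a nonzero real number and $n$ a positive integer. Then $$(n-1)!\,H_{n,-\lambda}=\sum_{k=1}^{n}(-1)^{n-k}\beta_{k-1,\lambda}(1-\lambda)\,S_{1,-\lambda}(n,k).$$
   Context: For a nonzero real parameter $\mu$ (used here with $\mu=\lambda$ and $\mu=-\lambda$), real $y$ and integer $k\ge0$: $(y)_{0,\mu}=1$, $(y)_{k,\mu}=y(y-\mu)\cdots(y-(k-1)\mu)$; $(y)_0=1$, $(y)_k=y(y-1)\cdots(y-k+1)$. The degenerate exponential is $e_\mu^x(t)=\sum_{k\ge0}(x)_{k,\mu}t^k/k!=(1+\mu t)^{x/\mu}$, $e_\mu(t)=e^1_\mu(t)$. The degenerate Bernoulli polynomials are defined by $\frac{t}{e_\mu(t)-1}e_\mu^x(t)=\sum_{n\ge0}\beta_{n,\mu}(x)\frac{t^n}{n!}$. The degenerate Stirling numbers of the first kind $S_{1,\mu}(n,k)$ are defined by $(x)_{n}=\sum_{k=0}^{n}S_{1,\mu}(n,k)(x)_{k,\mu}$ ($n\ge0$). The degenerate harmonic numbers are $H_{0,\mu}=0$ and $H_{n,\mu}=\sum_{k=1}^{n}\frac{1}{\mu}\binom{\mu}{k}(-1)^{k-1}$ for $n\ge1$. *)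

theory Defs
  imports Complex_Main "HOL-Computational_Algebra.Formal_Power_Series"
begin

definition dfall :: "real \<Rightarrow> nat \<Rightarrow> real \<Rightarrow> real" where
  "dfall mu k y = (\<Prod>i<k. (y - of_nat i * mu))"

definition ffall :: "nat \<Rightarrow> real \<Rightarrow> real" where
  "ffall k y = (\<Prod>i<k. (y - of_nat i))"

definition dexp_fps :: "real \<Rightarrow> real \<Rightarrow> real fps" where
  "dexp_fps mu x = Abs_fps (\<lambda>k. dfall mu k x / fact k)"

definition dbernoulli :: "nat \<Rightarrow> real \<Rightarrow> real \<Rightarrow> real" where
  "dbernoulli n mu x =
     fact n * fps_nth (fps_X / (dexp_fps mu 1 - 1) * dexp_fps mu x) n"

definition dstirling1 :: "real \<Rightarrow> nat \<Rightarrow> nat \<Rightarrow> real" where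
  "dstirling1 mu n k =
     (THE s :: nat \<Rightarrow> real. (\<forall>x. ffall n x = (\<Sum>j\<le>n. s j * dfall mu j x))
                           \<and> (\<forall>j>n. s j = 0)) k"

definition dharmonic :: "nat \<Rightarrow> real \<Rightarrow> real" where
  "dharmonic n mu = (\<Sum>k=1..n. (1 / mu) * (mu gchoose k) * (-1) ^ (k - 1))"

end

theory Submission
  imports Defs "HOL-Computational_Algebra.Polynomial"
begin

unbundle fps_syntax


definition is_poly :: "(real \<Rightarrow> real) \<Rightarrow> bool" where
  "is_poly F \<longleftrightarrow> (\<exists>p. \<forall>x. F x = poly p x)"

lemma is_poly_const: "is_poly (\<lambda>x. c)"
  unfolding is_poly_def by (rule exI[of _ "[:c:]"]) simp

lemma is_poly_id: "is_poly (\<lambda>x. x)"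
  unfolding is_poly_def by (rule exI[of _ "[:0,1:]"]) simp

lemma is_poly_add: "is_poly F \<Longrightarrow> is_poly G \<Longrightarrow> is_poly (\<lambda>x. F x + G x)"
  unfolding is_poly_def by (metis poly_add)

lemma is_poly_diff: "is_poly F \<Longrightarrow> is_poly G \<Longrightarrow> is_poly (\<lambda>x. F x - G x)"
  unfolding is_poly_def by (metis poly_diff)

lemma is_poly_mult: "is_poly F \<Longrightarrow> is_poly G \<Longrightarrow> is_poly (\<lambda>x. F x * G x)"
  unfolding is_poly_def by (metis poly_mult)

lemma is_poly_divc: "is_poly F \<Longrightarrow> is_poly (\<lambda>x. F x / c)"
  unfolding is_poly_def by (metis poly_smult divide_inverse mult.commute)

lemma is_poly_sum: "(\<And>i. i \<in> A \<Longrightarrow> is_poly (F i)) \<Longrightarrow> is_poly (\<lambda>x. \<Sum>i\<in>A. F i x)"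
proof (induction A rule: infinite_finite_induct)
  case (infinite A) then show ?case by (simp add: is_poly_const)
next
  case empty then show ?case by (simp add: is_poly_const)
next
  case (insert a A) then show ?case by (simp add: is_poly_add)
qed

lemma is_poly_prod: "(\<And>i. i \<in> A \<Longrightarrow> is_poly (F i)) \<Longrightarrow> is_poly (\<lambda>x. \<Prod>i\<in>A. F i x)"
proof (induction A rule: infinite_finite_induct)
  case (infinite A) then show ?case by (simp add: is_poly_const)
next
  case empty then show ?case by (simp add: is_poly_const)
next
  case (insert a A) then show ?case by (simp add: is_poly_mult)
qed

lemma is_poly_zero:
  assumes "is_poly F" "\<And>m::nat. F (real m + 1) = 0"
  shows "F x = 0"
proof -
  obtain p where p: "\<And>x. F x = poly p x" using assms(1) unfolding is_poly_def by blast
  have "p = 0"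
  proof (rule ccontr)
    assume "p \<noteq> 0"
    then have "finite {x. poly p x = 0}" by (rule poly_roots_finite)
    moreover have "range (\<lambda>m::nat. real m + 1) \<subseteq> {x. poly p x = 0}" using assms(2) p by auto
    moreover have "infinite (range (\<lambda>m::nat. real m + 1))"
      by (rule range_inj_infinite) (simp add: inj_on_def)
    ultimately show False using finite_subset by blast
  qed
  thus ?thesis using p by simp
qed

lemma dfall_Suc: "dfall mu (Suc k) y = dfall mu k y * (y - of_nat k * mu)"
  by (simp add: dfall_def)

lemma dfall_Suc': "dfall mu (Suc k) y = y * dfall mu k (y - mu)"
  unfolding dfall_def prod.lessThan_Suc_shift by (simp add: algebra_simps)

lemma dfall_0 [simp]: "dfall mu 0 y = 1"
  by (simp add: dfall_def)

lemma dfall_gchoose: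
  assumes "mu \<noteq> 0"
  shows "dfall mu k y = mu ^ k * (fact k * ((y / mu) gchoose k))"
proof -
  have "dfall mu k y = (\<Prod>i<k. mu * (y / mu - of_nat i))"
    unfolding dfall_def using assms by (intro prod.cong) (auto simp: field_simps)
  also have "\<dots> = mu ^ k * (\<Prod>i<k. (y / mu - of_nat i))"
    by (simp add: prod.distrib)
  also have "(\<Prod>i<k. (y / mu - of_nat i)) = fact k * ((y / mu) gchoose k)"
    by (simp add: gbinomial_mult_fact atLeast0LessThan)
  finally show ?thesis .
qed

lemma dfall_neg: "dfall lam k x = (-1) ^ k * dfall (- lam) k (- x)"
proof -
  have "dfall lam k x = (\<Prod>i<k. (-1) * (- x - of_nat i * (- lam)))"
    unfolding dfall_def by (intro prod.cong) auto
  also have "\<dots> = (\<Prod>i<k. (-1::real)) * (\<Prod>i<k. (- x - of_nat i * (- lam)))"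
    by (rule prod.distrib)
  also have "\<dots> = (-1) ^ k * dfall (- lam) k (- x)"
    by (simp add: dfall_def)
  finally show ?thesis .
qed

lemma is_poly_dfall: "is_poly (\<lambda>x. dfall mu k (x - a))"
  unfolding dfall_def
  by (intro is_poly_prod is_poly_diff is_poly_id is_poly_const)




lemma dexp_nth: "dexp_fps mu x $ k = dfall mu k x / fact k"
  by (simp add: dexp_fps_def)

lemma dexp_add:
  assumes "lam \<noteq> 0"
  shows "dexp_fps lam (x + y) = dexp_fps lam x * dexp_fps lam y"
proof (rule fps_ext)
  fix n
  have "dexp_fps lam (x + y) $ n = lam ^ n * ((x / lam + y / lam) gchoose n)"
    using assms by (simp add: dexp_nth dfall_gchoose add_divide_distrib)
  also have "\<dots> = lam ^ n * (\<Sum>k=0..n. (x / lam gchoose k) * (y / lam gchoose (n - k)))"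
    by (simp add: gbinomial_Vandermonde)
  also have "\<dots> = (\<Sum>k=0..n. (lam ^ k * (x / lam gchoose k)) * (lam ^ (n - k) * (y / lam gchoose (n - k))))"
    unfolding sum_distrib_left
    by (intro sum.cong refl) (auto simp: power_add[symmetric])
  also have "\<dots> = (dexp_fps lam x * dexp_fps lam y) $ n"
    using assms by (simp add: fps_mult_nth dexp_nth dfall_gchoose)
  finally show "dexp_fps lam (x + y) $ n = (dexp_fps lam x * dexp_fps lam y) $ n" .
qed

lemma dexp_shift:
  "dexp_fps lam (x + lam) = (1 + fps_const lam * fps_X) * dexp_fps lam x"
proof (rule fps_ext)
  fix n
  show "dexp_fps lam (x + lam) $ n = ((1 + fps_const lam * fps_X) * dexp_fps lam x) $ n"
  proof (cases n)
    case 0 then show ?thesis by (simp add: dexp_nth)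
  next
    case (Suc k)
    have e1: "dfall lam (Suc k) (x + lam) = (x + lam) * dfall lam k x"
      by (simp add: dfall_Suc')
    have e2: "dfall lam (Suc k) x = dfall lam k x * (x - of_nat k * lam)"
      by (simp add: dfall_Suc)
    have "((1 + fps_const lam * fps_X) * dexp_fps lam x) $ Suc k
        = dexp_fps lam x $ Suc k + lam * dexp_fps lam x $ k"
      by (simp add: distrib_right mult.assoc)
    also have "\<dots> = dfall lam (Suc k) (x + lam) / fact (Suc k)"
    proof -
      have f: "(fact (Suc k)::real) = (real k + 1) * fact k" by simp
      have gen: "D * (x - c * lam) / ((c + 1) * F) + lam * (D / F) = (x + lam) * D / ((c + 1) * F)"
        if "F > 0" "c \<ge> 0" for D c F :: real
      proof -
        have "F + F * c > 0" using that by (simp add: add_pos_nonneg)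
        hence "(c + 1) * F \<noteq> 0" using that by (auto simp: algebra_simps)
        hence a: "lam * (D / F) = lam * D * (c + 1) / ((c + 1) * F)" by simp
        have b: "D * (x - c * lam) + lam * D * (c + 1) = (x + lam) * D" by (simp add: algebra_simps)
        show ?thesis unfolding a add_divide_distrib[symmetric] b ..
      qed
      show ?thesis unfolding dexp_nth e1 e2 f using gen[of "fact k" "real k" "dfall lam k x"] by simp
    qed
    finally show ?thesis using Suc by (simp add: dexp_nth)
  qed
qed

definition bgen :: "real \<Rightarrow> real fps" where
  "bgen lam = fps_X / (dexp_fps lam 1 - 1)"

lemma bgen_mult: "bgen lam * (dexp_fps lam 1 - 1) = fps_X"
proof -
  have nz: "(dexp_fps lam 1 - 1) $ 1 \<noteq> 0" by (simp add: dexp_nth dfall_def)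
  hence "dexp_fps lam 1 - 1 \<noteq> 0" by auto
  moreover have "subdegree (dexp_fps lam 1 - 1) \<le> subdegree (fps_X :: real fps)"
    using subdegree_leI[OF nz] by simp
  ultimately show ?thesis unfolding bgen_def by (rule fps_times_divide_eq)
qed

lemma dbernoulli_alt: "dbernoulli n lam x = fact n * (bgen lam * dexp_fps lam x) $ n"
  by (simp add: dbernoulli_def bgen_def)

lemma bern_diff1:
  assumes "lam \<noteq> 0"
  shows "dbernoulli (Suc k) lam (y + 1) - dbernoulli (Suc k) lam y = of_nat (Suc k) * dfall lam k y"
proof -
  have "bgen lam * dexp_fps lam (y + 1) - bgen lam * dexp_fps lam y
      = bgen lam * (dexp_fps lam 1 - 1) * dexp_fps lam y"
    using dexp_add[OF assms, of 1 y] by (simp add: add.commute algebra_simps)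
  also have "\<dots> = fps_X * dexp_fps lam y" by (simp add: bgen_mult)
  finally have "(bgen lam * dexp_fps lam (y + 1)) $ Suc k - (bgen lam * dexp_fps lam y) $ Suc k
      = dfall lam k y / fact k"
    by (metis fps_sub_nth fps_X_mult_nth dexp_nth diff_Suc_1 nat.distinct(1))
  then show ?thesis unfolding dbernoulli_alt
    by (simp add: right_diff_distrib[symmetric] del: of_nat_Suc)
qed

lemma bern_difflam:
  shows "dbernoulli (Suc k) lam (y + lam) - dbernoulli (Suc k) lam y
      = lam * of_nat (Suc k) * dbernoulli k lam y"
proof -
  have "bgen lam * dexp_fps lam (y + lam) - bgen lam * dexp_fps lam y
      = fps_X * (fps_const lam * (bgen lam * dexp_fps lam y))"
    unfolding dexp_shift by (simp add: algebra_simps)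
  then have "(bgen lam * dexp_fps lam (y + lam)) $ Suc k - (bgen lam * dexp_fps lam y) $ Suc k
      = lam * (bgen lam * dexp_fps lam y) $ k"
    by (metis fps_sub_nth fps_X_mult_nth fps_mult_left_const_nth diff_Suc_1 nat.distinct(1))
  then show ?thesis unfolding dbernoulli_alt
    by (simp add: right_diff_distrib[symmetric] del: of_nat_Suc)
qed

lemma is_poly_bern: "is_poly (\<lambda>x. dbernoulli k lam (x - a))"
  unfolding dbernoulli_alt fps_mult_nth dexp_nth
  by (intro is_poly_mult is_poly_const is_poly_sum is_poly_dfall is_poly_divc) 



fun stir :: "real \<Rightarrow> nat \<Rightarrow> nat \<Rightarrow> real" where
  "stir mu 0 k = (if k = 0 then 1 else 0)"
| "stir mu (Suc n) k = (if k = 0 then 0 else stir mu n (k - 1)) + (of_nat k * mu - of_nat n) * stir mu n k"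

lemma stir_gt: "k > n \<Longrightarrow> stir mu n k = 0"
  by (induction n arbitrary: k) auto

lemma stir_Suc_0: "stir mu (Suc n) 0 = 0"
  by (induction n) auto

lemma ffall_Suc: "ffall (Suc n) x = ffall n x * (x - of_nat n)"
  by (simp add: ffall_def)

lemma stir_expand: "ffall n x = (\<Sum>j\<le>n. stir mu n j * dfall mu j x)"
proof (induction n)
  case 0 then show ?case by (simp add: ffall_def)
next
  case (Suc n)
  let ?s = "stir mu n"
  have "ffall (Suc n) x = (\<Sum>j\<le>n. ?s j * (dfall mu j x * (x - of_nat n)))"
    using Suc by (simp add: ffall_Suc sum_distrib_right mult.assoc)
  also have "\<dots> = (\<Sum>j\<le>n. ?s j * dfall mu (Suc j) x) + (\<Sum>j\<le>n. (of_nat j * mu - of_nat n) * ?s j * dfall mu j x)"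
    by (simp add: dfall_Suc sum.distrib[symmetric] algebra_simps)
  also have "(\<Sum>j\<le>n. ?s j * dfall mu (Suc j) x) = (\<Sum>j\<le>Suc n. (if j = 0 then 0 else ?s (j - 1)) * dfall mu j x)"
    unfolding sum.atMost_Suc_shift by simp
  also have "(\<Sum>j\<le>n. (of_nat j * mu - of_nat n) * ?s j * dfall mu j x) = (\<Sum>j\<le>Suc n. (of_nat j * mu - of_nat n) * ?s j * dfall mu j x)"
    by (simp add: stir_gt)
  finally show ?case
    by (simp add: sum.distrib[symmetric] algebra_simps)
qed

lemma dfall_self_nz: "mu \<noteq> 0 \<Longrightarrow> dfall mu i (of_nat i * mu) \<noteq> 0"
  unfolding dfall_def by (auto simp: algebra_simps)

lemma dfall_self_z: "i < j \<Longrightarrow> dfall mu j (of_nat i * mu) = 0"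
  unfolding dfall_def by (rule prod_zero) auto

lemma dfall_uniq:
  assumes "mu \<noteq> 0" "\<And>x. (\<Sum>j\<le>n. s j * dfall mu j x) = 0"
  shows "i \<le> n \<Longrightarrow> s i = 0"
proof (induction i rule: less_induct)
  case (less i)
  have "(\<Sum>j\<le>n. s j * dfall mu j (of_nat i * mu)) = (\<Sum>j\<le>n. if j = i then s i * dfall mu i (of_nat i * mu) else 0)"
  proof (intro sum.cong refl)
    fix j assume "j \<in> {..n}"
    show "s j * dfall mu j (of_nat i * mu) = (if j = i then s i * dfall mu i (of_nat i * mu) else 0)"
      using less.IH[of j] less.prems \<open>j \<in> {..n}\<close> dfall_self_z[of i j mu]
      by (cases "j < i") (auto simp: not_less)
  qed
  also have "\<dots> = s i * dfall mu i (of_nat i * mu)" using less.prems by simp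
  finally show ?case using assms dfall_self_nz[OF assms(1), of i] by simp
qed

lemma dstirling1_eq:
  assumes "mu \<noteq> 0"
  shows "dstirling1 mu n = stir mu n"
  unfolding dstirling1_def
proof (rule the_equality)
  show "(\<forall>x. ffall n x = (\<Sum>j\<le>n. stir mu n j * dfall mu j x)) \<and> (\<forall>j>n. stir mu n j = 0)"
    using stir_expand stir_gt by blast
next
  fix s assume H: "(\<forall>x. ffall n x = (\<Sum>j\<le>n. s j * dfall mu j x)) \<and> (\<forall>j>n. s j = 0)"
  have z: "\<And>x. (\<Sum>j\<le>n. (s j - stir mu n j) * dfall mu j x) = 0"
    using H stir_expand[of n _ mu] by (simp add: left_diff_distrib sum_subtractf)
  show "s = stir mu n"
  proof
    fix j show "s j = stir mu n j"
      using dfall_uniq[OF assms z, of j] H stir_gt[of n j mu] by (cases "j \<le> n") auto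
  qed
qed



lemma harm_term:
  assumes "lam \<noteq> 0"
  shows "(1 / (- lam)) * ((- lam) gchoose Suc j) * (-1) ^ (Suc j - 1) = pochhammer (lam + 1) j / fact (Suc j)"
proof -
  define Q where "Q = pochhammer (lam + 1) j / fact (Suc j)"
  have g: "(- lam) gchoose Suc j = - ((-1) ^ j * lam) * Q"
    unfolding Q_def by (simp add: gbinomial_pochhammer pochhammer_rec)
  have pp: "((-1::real) ^ j) * (-1) ^ j = 1"
    by (simp add: power_mult_distrib[symmetric])
  have "(1 / (- lam)) * ((- lam) gchoose Suc j) * (-1) ^ (Suc j - 1) = (lam / lam) * ((-1) ^ j * (-1) ^ j) * Q"
    unfolding g by simp
  also have "\<dots> = Q" using assms pp by simp
  finally show ?thesis unfolding Q_def .
qed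

lemma harm_closed:
  assumes "lam \<noteq> 0"
  shows "dharmonic (Suc m) (- lam) = (pochhammer (lam + 1) (Suc m) - fact (Suc m)) / (lam * fact (Suc m))"
proof (induction m)
  case 0
  then show ?case using assms harm_term[OF assms, of 0] by (simp add: dharmonic_def)
next
  case (Suc m)
  have "dharmonic (Suc (Suc m)) (- lam) = dharmonic (Suc m) (- lam) + pochhammer (lam + 1) (Suc m) / fact (Suc (Suc m))"
    unfolding dharmonic_def sum.cl_ivl_Suc using harm_term[OF assms, of "Suc m"] by simp
  also have "\<dots> = (pochhammer (lam + 1) (Suc (Suc m)) - fact (Suc (Suc m))) / (lam * fact (Suc (Suc m)))"
  proof -
    let ?P = "pochhammer (lam + 1) (Suc m)" and ?F = "fact (Suc m) :: real"
    have P: "pochhammer (lam + 1) (Suc (Suc m)) = ?P * (lam + 1 + of_nat (Suc m))"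
      by (rule pochhammer_Suc)
    have F: "(fact (Suc (Suc m)) :: real) = (of_nat (Suc m) + 1) * ?F" by simp
    have Fp: "?F > 0" by simp
    have gen: "(P - F) / (lam * F) + P / ((c + 1) * F) = (P * (lam + 1 + c) - (c + 1) * F) / (lam * ((c + 1) * F))"
      if "F > 0" "c \<ge> 0" for P F c :: real
    proof -
      have nz: "c + 1 \<noteq> 0" using that by simp
      have a: "(P - F) / (lam * F) = (P - F) * (c + 1) / (lam * ((c + 1) * F))" using nz by simp
      have b: "P / ((c + 1) * F) = lam * P / (lam * ((c + 1) * F))" using assms by simp
      have n: "(P - F) * (c + 1) + lam * P = P * (lam + 1 + c) - (c + 1) * F" by (simp add: algebra_simps)
      show ?thesis unfolding a b add_divide_distrib[symmetric] n ..
    qed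
    show ?thesis unfolding Suc P F using gen[OF Fp, of "of_nat (Suc m)" ?P] by simp
  qed
  finally show ?case .
qed



lemma ffall_neg: "ffall n (- x) = (-1) ^ n * pochhammer x n"
proof -
  have "ffall n (- x) = (\<Prod>i<n. (-1) * (x + of_nat i))"
    unfolding ffall_def by (intro prod.cong) auto
  also have "\<dots> = (\<Prod>i<n. (-1::real)) * (\<Prod>i<n. (x + of_nat i))"
    by (rule prod.distrib)
  finally show ?thesis by (simp add: pochhammer_prod atLeast0LessThan)
qed

lemma is_poly_poch: "is_poly (\<lambda>x. pochhammer (x + a) k)"
  unfolding pochhammer_prod
  by (intro is_poly_prod is_poly_add is_poly_id is_poly_const)

theorem theorem8:
  fixes lambda :: real and n :: nat
  assumes "lambda \<noteq> 0" and "n \<ge> 1"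
  shows "fact (n - 1) * dharmonic n (- lambda) =
         (\<Sum>k=1..n. (-1) ^ (n - k) * dbernoulli (k - 1) lambda (1 - lambda)
                      * dstirling1 (- lambda) n k)"
proof -
  let ?lam = lambda
  obtain m where nm: "n = Suc m" using assms(2) by (cases n) auto
  have mu: "- ?lam \<noteq> 0" using assms by simp
  define S where "S = stir (- ?lam) n"
  define c where "c k = (-1) ^ (n - k) * S k" for k
  have S0: "S 0 = 0" unfolding S_def nm by (rule stir_Suc_0)
  have c0: "c 0 = 0" by (simp add: c_def S0)
  have atm: "{..n} = insert 0 {1..n}" by auto
  have rise: "(\<Sum>k\<in>{1..n}. c k * dfall ?lam k x) = pochhammer x n" for x
  proof -
    have "(\<Sum>k\<in>{1..n}. c k * dfall ?lam k x) = (\<Sum>k\<le>n. c k * dfall ?lam k x)"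
      unfolding atm by (simp add: c0)
    also have "\<dots> = (\<Sum>k\<le>n. (-1) ^ n * (S k * dfall (- ?lam) k (- x)))"
    proof (intro sum.cong refl)
      fix k assume "k \<in> {..n}"
      hence "(-1::real) ^ (n - k) * (-1) ^ k = (-1) ^ n" by (simp add: power_add[symmetric])
      thus "c k * dfall ?lam k x = (-1) ^ n * (S k * dfall (- ?lam) k (- x))"
        unfolding c_def dfall_neg[of ?lam k x] by (metis (no_types, lifting) mult.assoc mult.left_commute)
    qed
    also have "\<dots> = (-1) ^ n * ffall n (- x)"
      unfolding S_def stir_expand[of n "- x" "- ?lam"] by (simp add: sum_distrib_left)
    also have "\<dots> = pochhammer x n" by (simp add: ffall_neg power_mult_distrib[symmetric])
    finally show ?thesis .
  qed
  define g where "g (x::real) = (\<Sum>k\<in>{1..n}. c k * dfall ?lam (k - 1) (x - ?lam))" for x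
  define q where "q (x::real) = pochhammer (x + 1) m" for x
  have gq: "g x = q x" for x
  proof -
    have "is_poly (\<lambda>x. g x - q x)"
      unfolding g_def q_def
      by (intro is_poly_diff is_poly_sum is_poly_mult is_poly_const is_poly_dfall is_poly_poch)
    moreover have "g y - q y = 0" if "y \<noteq> 0" for y
    proof -
      have "y * g y = (\<Sum>k\<in>{1..n}. c k * dfall ?lam k y)"
        unfolding g_def sum_distrib_left
      proof (intro sum.cong refl)
        fix k assume "k \<in> {1..n}"
        then obtain j where "k = Suc j" by (cases k) auto
        thus "y * (c k * dfall ?lam (k - 1) (y - ?lam)) = c k * dfall ?lam k y"
          by (simp add: dfall_Suc')
      qed
      also have "\<dots> = y * q y" unfolding rise q_def by (simp add: nm pochhammer_rec)
      finally show ?thesis using that by simp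
    qed
    ultimately show ?thesis using is_poly_zero[of "\<lambda>x. g x - q x" x] by simp
  qed
  define f where "f (x::real) = (\<Sum>k\<in>{1..n}. c k * dbernoulli k ?lam (x - ?lam) / of_nat k)" for x
  define R where "R (x::real) = pochhammer x n / of_nat n" for x
  have fstep: "f (x + 1) - f x = g x" for x
  proof -
    have "f (x + 1) - f x = (\<Sum>k\<in>{1..n}. c k * ((dbernoulli k ?lam ((x - ?lam) + 1) - dbernoulli k ?lam (x - ?lam)) / of_nat k))"
      unfolding f_def sum_subtractf[symmetric] by (intro sum.cong refl) (simp add: algebra_simps diff_divide_distrib)
    also have "\<dots> = g x"
      unfolding g_def
    proof (intro sum.cong refl)
      fix k assume "k \<in> {1..n}"
      then obtain j where kj: "k = Suc j" by (cases k) auto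
      show "c k * ((dbernoulli k ?lam ((x - ?lam) + 1) - dbernoulli k ?lam (x - ?lam)) / of_nat k) = c k * dfall ?lam (k - 1) (x - ?lam)"
        unfolding kj bern_diff1[OF assms(1)] by (simp del: of_nat_Suc)
    qed
    finally show ?thesis .
  qed
  have Rstep: "R (x + 1) - R x = q x" for x
  proof -
    have "pochhammer (x + 1) n - pochhammer x n = of_nat n * q x"
      unfolding nm q_def pochhammer_Suc[of "x + 1" m] pochhammer_rec[of x m] by (simp add: algebra_simps)
    thus ?thesis unfolding R_def using nm by (simp add: diff_divide_distrib[symmetric])
  qed
  define h where "h (x::real) = f x - R x" for x
  have hper: "h (x + 1) = h x" for x
    using fstep[of x] Rstep[of x] gq[of x] unfolding h_def by simp
  have hconst: "h x = h 0" for x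
  proof -
    have "is_poly (\<lambda>x. h x - h 0)"
      unfolding h_def f_def R_def
      by (intro is_poly_diff is_poly_sum is_poly_mult is_poly_const is_poly_divc is_poly_bern
          is_poly_poch[of 0, simplified])
    moreover have "h (real j + 1) - h 0 = 0" for j
    proof (induction j)
      case 0 show ?case using hper[of 0] by simp
    next
      case (Suc j) then show ?case using hper[of "real j + 1"] by (simp add: add.commute add.left_commute)
    qed
    ultimately show ?thesis using is_poly_zero[of "\<lambda>x. h x - h 0" x] by simp
  qed
  have fR: "f (?lam + 1) - f 1 = R (?lam + 1) - R 1"
    using hconst[of "?lam + 1"] hconst[of 1] unfolding h_def by simp
  have "(\<Sum>k=1..n. (-1) ^ (n - k) * dbernoulli (k - 1) ?lam (1 - ?lam) * dstirling1 (- ?lam) n k)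
      = (\<Sum>k=1..n. c k * ((dbernoulli k ?lam 1 - dbernoulli k ?lam (1 - ?lam)) / of_nat k) / ?lam)"
  proof (intro sum.cong refl)
    fix k assume "k \<in> {1..n}"
    then obtain j where kj: "k = Suc j" by (cases k) auto
    have "dbernoulli k ?lam 1 - dbernoulli k ?lam (1 - ?lam) = ?lam * of_nat k * dbernoulli j ?lam (1 - ?lam)"
      using bern_difflam[of j ?lam "1 - ?lam"] kj by simp
    then show "(-1) ^ (n - k) * dbernoulli (k - 1) ?lam (1 - ?lam) * dstirling1 (- ?lam) n k
      = c k * ((dbernoulli k ?lam 1 - dbernoulli k ?lam (1 - ?lam)) / of_nat k) / ?lam"
      using assms(1) kj unfolding c_def S_def dstirling1_eq[OF mu] by (simp del: of_nat_Suc)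
  qed
  also have "\<dots> = (f (?lam + 1) - f 1) / ?lam"
    unfolding f_def sum_subtractf[symmetric] sum_divide_distrib
    by (intro sum.cong refl) (simp add: algebra_simps diff_divide_distrib)
  also have "\<dots> = (R (?lam + 1) - R 1) / ?lam" by (simp add: fR)
  also have "\<dots> = (pochhammer (?lam + 1) n - fact n) / (of_nat n * ?lam)"
    unfolding R_def by (simp add: pochhammer_fact diff_divide_distrib[symmetric] add.commute)
  also have "\<dots> = fact (n - 1) * dharmonic n (- ?lam)"
  proof -
    have "fact (n - 1) * dharmonic n (- ?lam) = fact m * ((pochhammer (?lam + 1) n - fact n) / (?lam * (of_nat n * fact m)))"
      unfolding nm harm_closed[OF assms(1)] by simp
    also have "\<dots> = (pochhammer (?lam + 1) n - fact n) / (of_nat n * ?lam)"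
    proof -
      have gen: "F * (A / (l * (k * F))) = A / (k * l)" if "F \<noteq> 0" for F A l k :: real
      proof -
        have "F * (A / (l * (k * F))) = (F * A) / (F * (k * l))" by (simp add: ac_simps)
        also have "\<dots> = A / (k * l)" using that by (rule nonzero_mult_divide_mult_cancel_left)
        finally show ?thesis .
      qed
      show ?thesis by (rule gen) simp
    qed
    finally show ?thesis by simp
  qed
  finally show ?thesis by simp
qed

end
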